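(* For every integer $1\le m\le D/4$, the Markov chain on $\Sigma_m$ induced by the local automaton gate set $\mathcal G$ is aperiodic: for any $S,S'\in\Sigma_m$ there exists $\ell_{\min}$ such that for every $\ell\ge\ell_{\min}$ there is a sequence of $\ell$ gates $u_1,\dots,u_\ell\in\mathcal G$ with $u_\ell\circ\cdots\circ u_1(S)=S'$.
   Context: Consider $N\ge3$ qubits on a ring (site indices modulo $N$), bitstrings $\mathbf z\in\{0,1\}^N$, $D=2^N$. The gate set is $\mathcal G=\{u_{iab}: i\in\{1,\dots,N\},\ a,b\in\{0,1\}\}$, where $u_{iab}$ is the permutation of $\{0,1\}^N$ that flips bit $i$ if and only if bit $i-1$ equals $a$ and bit $i+1$ equals $b$. $\Sigma_m$ is the set of subsets of $\{0,1\}^N$ of cardinality $m$, with $u(S)=\{u(\mathbf z):\mathbf z\in S\}$. The induced Markov chain has transition matrix $\Gamma_{S,S'}=\frac{1}{|\mathcal G|}\sum_{u\in\mathcal G}\delta_{S',u(S)}$. *)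

theory Defs
  imports Main
begin

definition bitstrings :: "nat \<Rightarrow> bool list set" where
  "bitstrings N = {z. length z = N}"

definition gate :: "nat \<Rightarrow> nat \<Rightarrow> bool \<Rightarrow> bool \<Rightarrow> bool list \<Rightarrow> bool list" where
  "gate N i a b z =
     (if z ! ((i + N - 1) mod N) = a \<and> z ! ((i + 1) mod N) = b
      then z[i := \<not> z ! i] else z)"

definition gate_set :: "nat \<Rightarrow> (bool list \<Rightarrow> bool list) set" where
  "gate_set N = {gate N i a b | i a b. i < N}"

definition Sigma_m :: "nat \<Rightarrow> nat \<Rightarrow> bool list set set" where
  "Sigma_m N m = {S. S \<subseteq> bitstrings N \<and> card S = m}"

definition apply_gates :: "(bool list \<Rightarrow> bool list) list \<Rightarrow> bool list set \<Rightarrow> bool list set" where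
  "apply_gates us S = fold (\<lambda>u T. u ` T) us S"

end

theory Submission
  imports Defs
begin


definition flip :: "nat \<Rightarrow> bool list \<Rightarrow> bool list" where
  "flip i z = z[i := \<not> z!i]"
definition run :: "(bool list \<Rightarrow> bool list) list \<Rightarrow> bool list \<Rightarrow> bool list" where
  "run us z = fold (\<lambda>u z. u z) us z"
definition realizable :: "nat \<Rightarrow> (bool list \<Rightarrow> bool list) \<Rightarrow> bool" where
  "realizable N g \<longleftrightarrow> (\<exists>us. set us \<subseteq> gate_set N \<and> (\<forall>z\<in>bitstrings N. run us z = g z))"
definition CF :: "nat \<Rightarrow> (bool list \<Rightarrow> bool) \<Rightarrow> bool list \<Rightarrow> bool list" where
  "CF i P z = (if P z then flip i z else z)"
definition agree :: "nat set \<Rightarrow> bool list \<Rightarrow> bool list \<Rightarrow> bool" where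
  "agree K x z \<longleftrightarrow> (\<forall>k\<in>K. z!k = x!k)"
definition ok :: "nat \<Rightarrow> nat \<Rightarrow> nat set \<Rightarrow> bool" where
  "ok N t K \<longleftrightarrow> t < N \<and> t \<notin> K \<and> K \<subseteq> {..<N} \<and>
     (\<forall>x\<in>bitstrings N. realizable N (CF t (agree K x)))"
definition reach :: "nat \<Rightarrow> bool list set \<Rightarrow> bool list set \<Rightarrow> bool" where
  "reach N S T \<longleftrightarrow> (\<exists>us. set us \<subseteq> gate_set N \<and> apply_gates us S = T)"

lemma length_flip[simp]: "length (flip i z) = length z"
  by (simp add: flip_def)
lemma nth_flip: "flip i z ! k = (if k = i \<and> i < length z then \<not> z!k else z!k)"
  by (cases "i < length z") (auto simp: flip_def nth_list_update list_update_beyond)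
lemma flip_flip[simp]: "flip i (flip i z) = z"
  by (cases "i < length z") (simp_all add: flip_def nth_list_update list_update_beyond)
lemma flip_bits[simp]: "flip i z \<in> bitstrings N \<longleftrightarrow> z \<in> bitstrings N"
  by (simp add: bitstrings_def)
lemma agree_flip: "i \<notin> K \<Longrightarrow> agree K x (flip i z) = agree K x z"
  by (auto simp: agree_def nth_flip)

lemma run_append: "run (us @ vs) z = run vs (run us z)"
  by (simp add: run_def)
lemma run_Cons: "run (u # us) z = run us (u z)"
  by (simp add: run_def)
lemma apply_gates_run: "apply_gates us S = run us ` S"
  by (induction us arbitrary: S) (auto simp: apply_gates_def run_def image_image)

lemma gate_bits: "z \<in> bitstrings N \<Longrightarrow> gate N i a b z \<in> bitstrings N"
  by (simp add: gate_def bitstrings_def)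
lemma run_bits: "set us \<subseteq> gate_set N \<Longrightarrow> z \<in> bitstrings N \<Longrightarrow> run us z \<in> bitstrings N"
proof (induction us arbitrary: z)
  case Nil then show ?case by (simp add: run_def)
next
  case (Cons u us)
  then obtain i a b where "u = gate N i a b" by (auto simp: gate_set_def)
  with Cons show ?case by (simp add: run_Cons gate_bits)
qed

lemma realizable_bits: "realizable N g \<Longrightarrow> z \<in> bitstrings N \<Longrightarrow> g z \<in> bitstrings N"
  unfolding realizable_def using run_bits by metis

lemma realizable_id: "realizable N (\<lambda>z. z)"
  unfolding realizable_def by (rule exI[of _ "[]"]) (simp add: run_def)

lemma realizable_comp: "realizable N f \<Longrightarrow> realizable N g \<Longrightarrow> realizable N (\<lambda>z. g (f z))"
proof -
  assume f: "realizable N f" and g: "realizable N g"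
  from f obtain us where us: "set us \<subseteq> gate_set N" "\<forall>z\<in>bitstrings N. run us z = f z"
    unfolding realizable_def by blast
  from g obtain vs where vs: "set vs \<subseteq> gate_set N" "\<forall>z\<in>bitstrings N. run vs z = g z"
    unfolding realizable_def by blast
  show ?thesis unfolding realizable_def
    apply (rule exI[of _ "us @ vs"])
    using us vs realizable_bits[OF f] by (simp add: run_append)
qed

lemma realizable_cong: "realizable N f \<Longrightarrow> (\<And>z. z \<in> bitstrings N \<Longrightarrow> f z = g z) \<Longrightarrow> realizable N g"
  unfolding realizable_def by metis

lemma realizable_reach: "realizable N g \<Longrightarrow> S \<subseteq> bitstrings N \<Longrightarrow> reach N S (g ` S)"
  unfolding realizable_def reach_def apply (clarsimp simp: apply_gates_run)
  by (metis image_cong subsetD)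

lemma reach_refl: "reach N S S"
  unfolding reach_def by (rule exI[of _ "[]"]) (simp add: apply_gates_def)

lemma reach_trans: "reach N S T \<Longrightarrow> reach N T U \<Longrightarrow> reach N S U"
  unfolding reach_def apply clarify
  subgoal for us vs by (rule exI[of _ "us @ vs"]) (simp add: apply_gates_def)
  done

lemma CF_xor:
  assumes "\<And>z. z \<in> bitstrings N \<Longrightarrow> P (flip i z) = P z" "z \<in> bitstrings N"
  shows "CF i P (CF i Q z) = CF i (\<lambda>z. P z \<noteq> Q z) z"
  using assms by (auto simp: CF_def)


lemma ok_down:
  assumes ok: "ok N t K" and k: "k \<in> K"
  shows "ok N t (K - {k})"
proof -
  have kt: "k \<noteq> t" "k < N" using ok k by (auto simp: ok_def)
  { fix x assume x: "x \<in> bitstrings N"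
    let ?P = "agree K x" and ?Q = "agree K (flip k x)"
    have r1: "realizable N (CF t ?P)" "realizable N (CF t ?Q)" using ok x by (auto simp: ok_def)
    have "realizable N (\<lambda>z. CF t ?P (CF t ?Q z))" by (rule realizable_comp[OF r1(2) r1(1)])
    moreover have "CF t ?P (CF t ?Q z) = CF t (agree (K - {k}) x) z" if z: "z \<in> bitstrings N" for z
    proof -
      have tK: "t \<notin> K" using ok by (auto simp: ok_def)
      have "CF t ?P (CF t ?Q z) = CF t (\<lambda>z. ?P z \<noteq> ?Q z) z"
        by (rule CF_xor) (use z tK in \<open>auto simp: agree_flip\<close>)
      moreover have "(?P z \<noteq> ?Q z) = agree (K - {k}) x z"
        using k kt x z by (auto simp: agree_def nth_flip bitstrings_def)
      ultimately show ?thesis by (simp add: CF_def)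
    qed
    ultimately have "realizable N (CF t (agree (K - {k}) x))" by (rule realizable_cong)
  }
  then show ?thesis using ok by (auto simp: ok_def)
qed

lemma ok_mono_aux: "finite D \<Longrightarrow> ok N t (K \<union> D) \<Longrightarrow> D \<inter> K = {} \<Longrightarrow> ok N t K"
proof (induction D rule: finite_induct)
  case empty then show ?case by simp
next
  case (insert d D)
  have "ok N t ((K \<union> insert d D) - {d})" by (rule ok_down) (use insert in auto)
  moreover have "(K \<union> insert d D) - {d} = K \<union> D" using insert by auto
  ultimately show ?case using insert by auto
qed

lemma ok_mono: "ok N t K \<Longrightarrow> K' \<subseteq> K \<Longrightarrow> ok N t K'"
proof -
  assume a: "ok N t K" "K' \<subseteq> K"
  have "finite (K - K')" using a by (auto simp: ok_def intro: finite_subset)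
  moreover have "K = K' \<union> (K - K')" using a by auto
  ultimately show ?thesis using ok_mono_aux[of "K - K'" N t K'] a by auto
qed


lemma agree_Un: "agree (A \<union> B) x z = (agree A x z \<and> agree B x z)"
  by (auto simp: agree_def)

lemma and_pt:
  assumes st: "s \<noteq> t" "s < N" "t < N" "t \<notin> K" "s \<notin> K'" "t \<notin> K'" "s \<notin> K"
    and lz: "length z = N"
  shows "CF t (agree (insert s K) x) (CF s (agree K' x) (CF t (agree (insert s K) x) (CF s (agree K' x) z)))
     = CF t (agree (K \<union> K') x) z"
proof -
  have ag1: "agree K' x (flip t w) = agree K' x w" "agree K' x (flip s w) = agree K' x w" for w
    using st by (auto simp: agree_flip)
  have ag2: "agree K x (flip t w) = agree K x w" "agree K x (flip s w) = agree K x w" for w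
    using st by (auto simp: agree_flip)
  have ags: "agree (insert s K) x w = (w!s = x!s \<and> agree K x w)" for w
    by (auto simp: agree_def)
  have fs: "flip s w ! s = (\<not> w!s)" "flip t w ! s = w ! s" if "length w = N" for w
    using st that by (auto simp: nth_flip)
  have comm: "flip t (flip s w) = flip s (flip t w)" for w
    using st by (cases "s < length w"; cases "t < length w") (auto simp: flip_def list_update_swap nth_list_update list_update_beyond)
  have fss: "flip s (flip t (flip s w)) = flip t w" for w by (simp add: comm)
  show ?thesis
  proof (cases "agree K' x z")
    case True
    then show ?thesis using lz
      by (cases "agree K x z"; cases "z!s = x!s") (simp_all add: CF_def ag1 ag2 ags fs agree_Un fss)
  next
    case False
    then show ?thesis using lz
      by (cases "agree K x z"; cases "z!s = x!s") (simp_all add: CF_def ag1 ag2 ags fs agree_Un)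
  qed
qed



lemma ok_and:
  assumes A: "ok N t (insert s K)" and B: "ok N s K'" and tK': "t \<notin> K'" and sK: "s \<notin> K"
  shows "ok N t (K \<union> K')"
proof -
  have st: "s \<noteq> t" "s < N" "t < N" "t \<notin> K" "s \<notin> K'"
    using A B unfolding ok_def by auto
  { fix x assume x: "x \<in> bitstrings N"
    let ?B = "CF t (agree (insert s K) x)" and ?A = "CF s (agree K' x)"
    have rA: "realizable N ?A" using B x unfolding ok_def by blast
    have rB: "realizable N ?B" using A x unfolding ok_def by blast
    have "realizable N (\<lambda>z. ?B (?A (?B (?A z))))"
      using realizable_comp[OF realizable_comp[OF realizable_comp[OF rA rB] rA] rB] by simp
    moreover have "?B (?A (?B (?A z))) = CF t (agree (K \<union> K') x) z" if z: "z \<in> bitstrings N" for z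
      by (rule and_pt) (use st tK' sK z in \<open>auto simp: bitstrings_def\<close>)
    ultimately have "realizable N (CF t (agree (K \<union> K') x))" by (rule realizable_cong)
  }
  moreover have "K \<union> K' \<subseteq> {..<N}" using A B unfolding ok_def by auto
  ultimately show ?thesis using st tK' unfolding ok_def by auto
qed

definition sh :: "nat \<Rightarrow> nat \<Rightarrow> nat \<Rightarrow> nat" where "sh N t k = (t + k) mod N"

lemma ok_base:
  assumes N: "N \<ge> 3" and t: "t < N"
  shows "ok N t {sh N t (N - 1), sh N t 1}"
proof -
  have d: "sh N t (N-1) \<noteq> t" "sh N t 1 \<noteq> t" "sh N t (N-1) < N" "sh N t 1 < N"
    using N t by (auto simp: sh_def mod_if)
  have e: "t + N - Suc 0 = t + (N - Suc 0)" using N by simp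
  { fix x assume x: "x \<in> bitstrings N"
    let ?g = "gate N t (x ! sh N t (N-1)) (x ! sh N t 1)"
    have "?g \<in> gate_set N" using t by (auto simp: gate_set_def)
    then have "realizable N ?g" unfolding realizable_def
      by (intro exI[of _ "[?g]"]) (simp add: run_def)
    moreover have "?g z = CF t (agree {sh N t (N - 1), sh N t 1} x) z" for z
      by (simp add: gate_def CF_def agree_def flip_def e sh_def)
    ultimately have "realizable N (CF t (agree {sh N t (N - 1), sh N t 1} x))"
      by (rule realizable_cong)
  }
  then show ?thesis using d t unfolding ok_def by auto
qed

lemma mod2: "(x::nat) < 2 * N \<Longrightarrow> x mod N = (if x < N then x else x - N)"
proof (cases "x < N")
  case False
  assume "x < 2 * N"
  then have "x - N < N" using False by simp
  then show ?thesis using False by (simp add: le_mod_geq)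
qed simp

lemma sh_lt: "0 < N \<Longrightarrow> sh N t k < N" by (simp add: sh_def)
lemma sh_sh: "sh N (sh N t a) b = sh N t (a + b)" by (simp add: sh_def mod_add_left_eq add.assoc)
lemma sh_N: "sh N t (k + N) = sh N t k"
  unfolding sh_def by (metis add.assoc mod_add_self2)
lemma sh_0: "t < N \<Longrightarrow> sh N t 0 = t" by (simp add: sh_def)
lemma sh_inj: "t < N \<Longrightarrow> a < N \<Longrightarrow> b < N \<Longrightarrow> sh N t a = sh N t b \<Longrightarrow> a = b"
  unfolding sh_def by (subst (asm) (1 2) mod2) (auto split: if_splits)
lemma sh_inj2: "t < N \<Longrightarrow> s < N \<Longrightarrow> a < N \<Longrightarrow> sh N t a = sh N s a \<Longrightarrow> t = s"
  unfolding sh_def by (subst (asm) (1 2) mod2) (auto split: if_splits)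
lemma sh_ne: "t < N \<Longrightarrow> 0 < k \<Longrightarrow> k < N \<Longrightarrow> sh N t k \<noteq> t"
  using sh_inj[of t N k 0] sh_0[of t N] by auto

definition Goff :: "nat \<Rightarrow> nat \<Rightarrow> nat set" where
  "Goff N r = {N - 1} \<union> {1..<r} \<union> {r + 1}"

lemma ok_G1:
  assumes N: "N \<ge> 3" and t: "t < N"
  shows "ok N t (sh N t ` Goff N 1)"
proof -
  let ?s = "sh N t 1"
  have s: "?s < N" using N by (simp add: sh_lt)
  have A: "ok N t (insert ?s {sh N t (N-1)})" using ok_base[OF N t] by (simp add: insert_commute)
  have B0: "ok N ?s {sh N ?s (N - 1), sh N ?s 1}" by (rule ok_base[OF N s])
  have "sh N ?s (N - 1) = t" using N t by (simp add: sh_sh sh_N[of N t 0, simplified] sh_0)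
  moreover have "sh N ?s 1 = sh N t 2" by (simp add: sh_sh numeral_2_eq_2)
  ultimately have B: "ok N ?s {sh N t 2}" using ok_mono[OF B0] by auto
  have "ok N t ({sh N t (N-1)} \<union> {sh N t 2})"
  proof (rule ok_and[OF A B])
    show "t \<notin> {sh N t 2}" using sh_ne[OF t, of 2] N by auto
    show "?s \<notin> {sh N t (N - 1)}" using sh_inj[OF t, of 1 "N-1"] N by auto
  qed
  moreover have "Goff N 1 = {N-1, 2}" by (auto simp: Goff_def)
  ultimately show ?thesis by (simp add: insert_commute)
qed

lemma ok_Gstep:
  assumes N: "N \<ge> 3" and t: "t < N" and r: "1 \<le> r" "r + 2 < N"
    and G: "ok N t (sh N t ` Goff N r)"
  shows "ok N t (sh N t ` Goff N (r + 1))"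
proof -
  let ?s = "sh N t (r + 1)"
  let ?K = "sh N t ` ({N - 1} \<union> {1..<r})"
  have s: "?s < N" using N by (simp add: sh_lt)
  have "sh N t ` Goff N r = insert ?s ?K" by (auto simp: Goff_def)
  then have A: "ok N t (insert ?s ?K)" using G by simp
  have B0: "ok N ?s {sh N ?s (N - 1), sh N ?s 1}" by (rule ok_base[OF N s])
  have "sh N ?s (N - 1) = sh N t r" using N
    by (simp add: sh_sh sh_N[of N t r, symmetric])
  moreover have "sh N ?s 1 = sh N t (r + 2)" by (simp add: sh_sh)
  ultimately have B: "ok N ?s {sh N t r, sh N t (r + 2)}" using B0 by simp
  have "ok N t (?K \<union> {sh N t r, sh N t (r + 2)})"
  proof (rule ok_and[OF A B])
    show "t \<notin> {sh N t r, sh N t (r + 2)}" using sh_ne[OF t, of r] sh_ne[OF t, of "r+2"] r by auto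
    show "?s \<notin> ?K"
    proof
      assume "?s \<in> ?K"
      then obtain k where k: "k \<in> {N - 1} \<union> {1..<r}" "sh N t (r + 1) = sh N t k" by blast
      then have "k < N" using N r by auto
      then have "k = r + 1" using sh_inj[OF t, of "r+1" k] k r by auto
      then show False using k r by auto
    qed
  qed
  moreover have "?K \<union> {sh N t r, sh N t (r + 2)} = sh N t ` Goff N (r + 1)"
  proof -
    have "Goff N (r + 1) = ({N - 1} \<union> {1..<r}) \<union> {r, r + 2}" using r by (auto simp: Goff_def)
    then show ?thesis by (simp add: image_Un)
  qed
  ultimately show ?thesis by (simp only:)
qed



lemma ok_G:
  assumes N: "N \<ge> 4" and t: "t < N"
  shows "1 \<le> r \<Longrightarrow> r + 3 \<le> N \<Longrightarrow> ok N t (sh N t ` Goff N r)"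
proof (induction r rule: nat_induct_at_least)
  case base then show ?case using ok_G1[of N t] N t by auto
next
  case (Suc r) then show ?case using ok_Gstep[of N t r] N t by auto
qed



lemma ok_G_full:
  assumes N: "N \<ge> 4" and t: "t < N"
  shows "ok N t ({..<N} - {t, sh N t (N - 3)})"
proof -
  have "Goff N (N - 3) = {1..<N} - {N - 3}" using N unfolding Goff_def by auto
  moreover have "sh N t ` ({1..<N} - {N - 3}) = {..<N} - {t, sh N t (N - 3)}"
  proof
    show "sh N t ` ({1..<N} - {N - 3}) \<subseteq> {..<N} - {t, sh N t (N - 3)}"
    proof
      fix e assume "e \<in> sh N t ` ({1..<N} - {N - 3})"
      then obtain k where k0: "k \<in> {1..<N} - {N - 3}" "e = sh N t k" by (rule imageE)
      then have k: "1 \<le> k" "k < N" "k \<noteq> N - 3" "e = sh N t k" by auto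
      then show "e \<in> {..<N} - {t, sh N t (N - 3)}"
        using sh_lt[of N t k] sh_ne[OF t, of k] sh_inj[OF t, of k "N-3"] N by auto
    qed
  next
    show "{..<N} - {t, sh N t (N - 3)} \<subseteq> sh N t ` ({1..<N} - {N - 3})"
    proof
      fix e assume e: "e \<in> {..<N} - {t, sh N t (N - 3)}"
      let ?k = "(e + N - t) mod N"
      have "sh N t ?k = (t + (e + N - t)) mod N" by (simp add: sh_def mod_add_right_eq)
      also have "t + (e + N - t) = e + N" using t by simp
      finally have ek: "sh N t ?k = e" using e by simp
      have "?k < N" using N by simp
      moreover have "?k \<noteq> 0"
      proof
        assume "?k = 0"
        then have "sh N t ?k = t" using sh_0[OF t] by simp
        then show False using ek e by simp
      qed
      moreover have "?k \<noteq> N - 3" using ek e by auto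
      ultimately show "e \<in> sh N t ` ({1..<N} - {N - 3})" using ek by (intro image_eqI[of e _ ?k]) auto
    qed
  qed
  moreover have "ok N t (sh N t ` Goff N (N - 3))" by (rule ok_G[OF N t]) (use N in auto)
  ultimately show ?thesis by (simp only:)
qed

lemma ok_F:
  assumes N: "N \<ge> 3" and t: "t < N" and s: "s < N" "s \<noteq> t"
  shows "ok N t ({..<N} - {t, s})"
proof (cases "N = 3")
  case True
  have "{..<N} - {t, s} \<subseteq> {sh N t (N - 1), sh N t 1}"
  proof
    fix e assume e: "e \<in> {..<N} - {t, s}"
    have "t = 0 \<or> t = 1 \<or> t = 2" using t True by arith
    moreover have "e = 0 \<or> e = 1 \<or> e = 2" using e True by auto
    ultimately show "e \<in> {sh N t (N - 1), sh N t 1}" using e True by (auto simp: sh_def)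
  qed
  then show ?thesis by (rule ok_mono[OF ok_base[OF N t]])
next
  case False
  then have N4: "N \<ge> 4" using N by simp
  let ?a = "sh N t (N - 3)" and ?b = "sh N s (N - 3)"
  show ?thesis
  proof (cases "s = ?a")
    case True
    then show ?thesis using ok_G_full[OF N4 t] by simp
  next
    case False
    have ab: "?a \<noteq> ?b" using sh_inj2[OF t s(1), of "N - 3"] s N4 by auto
    let ?K = "{..<N} - {t, s, ?a}" and ?K' = "{..<N} - {s, ?b, t}"
    have "insert s ?K = {..<N} - {t, ?a}" using False s by auto
    then have A: "ok N t (insert s ?K)" using ok_G_full[OF N4 t] by simp
    have B: "ok N s ?K'" by (rule ok_mono[OF ok_G_full[OF N4 s(1)]]) auto
    have "ok N t (?K \<union> ?K')" by (rule ok_and[OF A B]) auto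
    moreover have "?K \<union> ?K' = {..<N} - {t, s}" using ab by auto
    ultimately show ?thesis by (simp only:)
  qed
qed



definition Ed :: "nat \<Rightarrow> nat \<Rightarrow> bool list \<Rightarrow> bool list \<Rightarrow> bool" where
  "Ed N i u = agree ({..<N} - {i}) u"

lemma Ed_flip: "Ed N i u (flip i z) = Ed N i u z"
  unfolding Ed_def by (rule agree_flip) simp

lemma Ed_step:
  assumes k: "k < N" "k \<noteq> i" and u: "u \<in> bitstrings N" and z: "z \<in> bitstrings N"
  shows "(Ed N i u z \<noteq> Ed N i (flip k u) z) = agree ({..<N} - {i, k}) u z"
proof -
  have lu: "length u = N" using u by (simp add: bitstrings_def)
  have fk: "flip k u ! j = (if j = k then \<not> u ! j else u ! j)" for j
    using k lu by (simp add: nth_flip)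
  have "Ed N i u z = (agree ({..<N} - {i, k}) u z \<and> z!k = u!k)"
    using k by (auto simp: Ed_def agree_def)
  moreover have "Ed N i (flip k u) z = (agree ({..<N} - {i, k}) u z \<and> z!k = (\<not> u!k))"
    using k by (auto simp: Ed_def agree_def fk)
  ultimately show ?thesis by auto
qed

lemma edge_xor_aux:
  assumes N: "N \<ge> 3" and i: "i < N" and w: "w \<in> bitstrings N"
  shows "u \<in> bitstrings N \<Longrightarrow> card {k \<in> {..<N} - {i}. u!k \<noteq> w!k} = n \<Longrightarrow>
    realizable N (CF i (\<lambda>z. Ed N i u z \<noteq> Ed N i w z))"
proof (induction n arbitrary: u)
  case 0
  have "finite {k \<in> {..<N} - {i}. u!k \<noteq> w!k}" by simp
  then have "{k \<in> {..<N} - {i}. u!k \<noteq> w!k} = {}" using 0 by simp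
  then have "Ed N i u z = Ed N i w z" for z by (auto simp: Ed_def agree_def)
  then show ?case by (intro realizable_cong[OF realizable_id]) (simp add: CF_def)
next
  case (Suc n)
  let ?D = "{k \<in> {..<N} - {i}. u!k \<noteq> w!k}"
  have "?D \<noteq> {}" using Suc.prems(2) by (metis card.empty nat.distinct(1))
  then obtain k where k: "k < N" "k \<noteq> i" "u!k \<noteq> w!k" by auto
  let ?u = "flip k u"
  have lu: "length u = N" using Suc.prems by (simp add: bitstrings_def)
  have u': "?u \<in> bitstrings N" using Suc.prems by simp
  have fk: "?u ! j = (if j = k then \<not> u ! j else u ! j)" for j
    using k lu by (simp add: nth_flip)
  have "{k \<in> {..<N} - {i}. ?u!k \<noteq> w!k} = ?D - {k}" using k by (auto simp: fk)
  then have "card {k \<in> {..<N} - {i}. ?u!k \<noteq> w!k} = n" using Suc.prems k by simp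
  then have r2: "realizable N (CF i (\<lambda>z. Ed N i ?u z \<noteq> Ed N i w z))" using Suc.IH u' by blast
  have "ok N i ({..<N} - {i, k})" using ok_F[OF N i k(1) k(2)] .
  then have r1: "realizable N (CF i (agree ({..<N} - {i, k}) u))" using Suc.prems unfolding ok_def by blast
  have "realizable N (\<lambda>z. CF i (agree ({..<N} - {i, k}) u) (CF i (\<lambda>z. Ed N i ?u z \<noteq> Ed N i w z) z))"
    by (rule realizable_comp[OF r2 r1])
  moreover have "CF i (agree ({..<N} - {i, k}) u) (CF i (\<lambda>z. Ed N i ?u z \<noteq> Ed N i w z) z)
      = CF i (\<lambda>z. Ed N i u z \<noteq> Ed N i w z) z" if z: "z \<in> bitstrings N" for z
  proof -
    have "CF i (agree ({..<N} - {i, k}) u) (CF i (\<lambda>z. Ed N i ?u z \<noteq> Ed N i w z) z)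
      = CF i (\<lambda>z. agree ({..<N} - {i, k}) u z \<noteq> (Ed N i ?u z \<noteq> Ed N i w z)) z"
      by (rule CF_xor) (use z in \<open>simp_all add: agree_flip\<close>)
    also have "\<dots> = CF i (\<lambda>z. Ed N i u z \<noteq> Ed N i w z) z"
      using Ed_step[OF k(1) k(2) Suc.prems(1) z] by (auto simp: CF_def)
    finally show ?thesis .
  qed
  ultimately show ?case by (rule realizable_cong)
qed

lemma edge_xor:
  assumes N: "N \<ge> 3" and i: "i < N" and w: "w \<in> bitstrings N" and u: "u \<in> bitstrings N"
  shows "realizable N (CF i (\<lambda>z. Ed N i u z \<noteq> Ed N i w z))"
  using edge_xor_aux[OF N i w u] by blast




lemma bits_eq: "bitstrings N = {xs. set xs \<subseteq> (UNIV :: bool set) \<and> length xs = N}"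
  by (auto simp: bitstrings_def)

lemma finite_bits[simp]: "finite (bitstrings N)"
  unfolding bits_eq by (rule finite_lists_length_eq) simp

lemma card_bits: "card (bitstrings N) = 2 ^ N"
  unfolding bits_eq by (subst card_lists_length_eq) simp_all

definition Rb :: "nat \<Rightarrow> nat \<Rightarrow> bool list set" where
  "Rb N i = {z \<in> bitstrings N. z ! i = False}"

lemma card_Rb: assumes i: "i < N" shows "2 * card (Rb N i) = 2 ^ N"
proof -
  have inj: "inj (flip i)" by (metis flip_flip injI)
  have "bitstrings N = Rb N i \<union> flip i ` Rb N i"
  proof
    show "bitstrings N \<subseteq> Rb N i \<union> flip i ` Rb N i"
    proof
      fix z assume z: "z \<in> bitstrings N"
      show "z \<in> Rb N i \<union> flip i ` Rb N i"
      proof (cases "z ! i")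
        case True
        then have "flip i z \<in> Rb N i" using z i by (auto simp: Rb_def nth_flip bitstrings_def)
        then show ?thesis by (metis UnI2 flip_flip image_eqI)
      qed (use z in \<open>auto simp: Rb_def\<close>)
    qed
  qed (auto simp: Rb_def)
  moreover have "Rb N i \<inter> flip i ` Rb N i = {}"
  proof -
    have "flip i w ! i" if "w \<in> Rb N i" for w using that i by (simp add: Rb_def nth_flip bitstrings_def)
    then show ?thesis unfolding Rb_def by blast
  qed
  moreover have "finite (Rb N i)" unfolding Rb_def by simp
  ultimately have c1: "card (bitstrings N) = card (Rb N i) + card (flip i ` Rb N i)"
    by (metis card_Un_disjoint finite_imageI)
  have c2: "card (flip i ` Rb N i) = card (Rb N i)" using inj by (simp add: card_image inj_on_subset)
  show ?thesis using card_bits[of N] c1 c2 by linarith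
qed

lemma Ed_iff:
  assumes "z \<in> bitstrings N" "w \<in> bitstrings N" "i < N"
  shows "Ed N i w z \<longleftrightarrow> z[i := False] = w[i := False]"
proof -
  have l: "length z = N" "length w = N" using assms(1,2) by (auto simp: bitstrings_def)
  show ?thesis
    unfolding Ed_def agree_def list_eq_iff_nth_eq using l assms(3)
    by (auto simp: nth_list_update)
qed

lemma same_edge:
  assumes "z \<in> bitstrings N" "x \<in> bitstrings N" "i < N" "z[i := False] = x[i := False]"
  shows "z = x \<or> z = flip i x"
proof -
  have "z = (z[i := False])[i := z!i]" by simp
  moreover have "x = (x[i := False])[i := x!i]" by simp
  moreover have "flip i x = (x[i := False])[i := \<not> x!i]" by (simp add: flip_def)
  ultimately show ?thesis using assms(4) by (cases "z!i = x!i") auto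
qed

lemma adj:
  assumes N: "N \<ge> 3" and i: "i < N" and S: "S \<subseteq> bitstrings N" and c: "4 * card S \<le> 2 ^ N"
    and x: "x \<in> S" and fx: "flip i x \<notin> S"
  shows "reach N S (insert (flip i x) (S - {x}))"
proof -
  let ?r = "\<lambda>z. z[i := False]"
  have fS: "finite S" using finite_subset[OF S finite_bits] .
  have "card S \<noteq> 0" using fS x by auto
  then have "card S < card (Rb N i)" using c card_Rb[OF i] by linarith
  moreover have "card (?r ` S) \<le> card S" using fS by (rule card_image_le)
  ultimately have "\<not> Rb N i \<subseteq> ?r ` S"
  proof (intro notI)
    assume a: "card S < card (Rb N i)" "card (?r ` S) \<le> card S" "Rb N i \<subseteq> ?r ` S"
    have "card (Rb N i) \<le> card (?r ` S)" by (rule card_mono[OF finite_imageI[OF fS] a(3)])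
    then show False using a(1,2) by linarith
  qed
  then obtain \<rho> where rho: "\<rho> \<in> Rb N i" "\<rho> \<notin> ?r ` S" by blast
  have rb: "\<rho> \<in> bitstrings N" using rho by (simp add: Rb_def)
  have "\<rho> ! i = False" using rho(1) by (simp add: Rb_def)
  then have rr: "\<rho>[i := False] = \<rho>" using list_update_id[of \<rho> i] by simp
  have xb: "x \<in> bitstrings N" using x S by blast
  let ?g = "CF i (\<lambda>z. Ed N i x z \<noteq> Ed N i \<rho> z)"
  have rg: "realizable N ?g" by (rule edge_xor[OF N i rb xb])
  have gz: "?g z = (if z = x then flip i x else z)" if z: "z \<in> S" for z
  proof -
    have zb: "z \<in> bitstrings N" using z S by blast
    have "\<not> Ed N i \<rho> z" using Ed_iff[OF zb rb i] rr rho(2) z by auto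
    moreover have "Ed N i x z \<longleftrightarrow> z = x"
    proof
      assume "Ed N i x z"
      then have "z = x \<or> z = flip i x" using same_edge[OF zb xb i] Ed_iff[OF zb xb i] by blast
      then show "z = x" using z fx by blast
    qed (use Ed_iff[OF zb xb i] in simp)
    ultimately show ?thesis by (auto simp: CF_def)
  qed
  have "?g ` S = insert (flip i x) (S - {x})"
  proof -
    have "S = insert x (S - {x})" using x by blast
    then have "?g ` S = insert (?g x) (?g ` (S - {x}))" by (metis image_insert)
    moreover have "?g x = flip i x" using gz[OF x] by simp
    moreover have "?g ` (S - {x}) = (\<lambda>z. z) ` (S - {x})" 
    proof (rule image_cong[OF refl])
      fix z assume "z \<in> S - {x}"
      then show "?g z = z" using gz[of z] by simp
    qed
    moreover have "(\<lambda>z. z) ` (S - {x}) = S - {x}" by simp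
    ultimately show ?thesis by simp
  qed
  then show ?thesis using realizable_reach[OF rg S] by simp
qed




lemma card_swap:
  assumes "finite S" "b \<in> S" "a \<notin> S"
  shows "card (insert a (S - {b})) = card S"
proof -
  have "card S > 0" using assms by (auto simp: card_gt_0_iff)
  then show ?thesis using assms by (simp add: card_Suc_Diff1)
qed

lemma exch:
  assumes N: "N \<ge> 3"
  shows "S \<subseteq> bitstrings N \<Longrightarrow> 4 * card S \<le> 2 ^ N \<Longrightarrow> x \<in> S \<Longrightarrow> y \<in> bitstrings N \<Longrightarrow> y \<notin> S
    \<Longrightarrow> card {k \<in> {..<N}. x!k \<noteq> y!k} = n \<Longrightarrow> reach N S (insert y (S - {x}))"
proof (induction n arbitrary: S x)
  case 0
  have xb: "x \<in> bitstrings N" using 0 by blast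
  have "{k \<in> {..<N}. x!k \<noteq> y!k} = {}" using 0 by simp
  then have "x = y" using xb 0(4) by (auto simp: bitstrings_def list_eq_iff_nth_eq)
  then show ?case using 0 by blast
next
  case (Suc n)
  have fS: "finite S" using finite_subset[OF Suc.prems(1) finite_bits] .
  have xb: "x \<in> bitstrings N" using Suc.prems by blast
  let ?D = "{k \<in> {..<N}. x!k \<noteq> y!k}"
  have "?D \<noteq> {}" using Suc.prems(6) by (metis card.empty nat.distinct(1))
  then obtain k where k: "k < N" "x!k \<noteq> y!k" by auto
  let ?p = "flip k x"
  have lx: "length x = N" using xb by (simp add: bitstrings_def)
  have fk: "?p ! j = (if j = k then \<not> x ! j else x ! j)" for j
    using k lx by (simp add: nth_flip)
  have pb: "?p \<in> bitstrings N" using xb by simp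
  have "{j \<in> {..<N}. ?p!j \<noteq> y!j} = ?D - {k}" using k by (auto simp: fk)
  then have cp: "card {j \<in> {..<N}. ?p!j \<noteq> y!j} = n" using Suc.prems(6) k by simp
  have px: "?p \<noteq> x" using fk[of k] by auto
  show ?case
  proof (cases "?p = y")
    case True
    then show ?thesis using adj[OF N k(1) Suc.prems(1,2,3)] Suc.prems(5) by simp
  next
    case py: False
    show ?thesis
    proof (cases "?p \<in> S")
      case False
      let ?S1 = "insert ?p (S - {x})"
      have r1: "reach N S ?S1" using adj[OF N k(1) Suc.prems(1,2,3) False] .
      have c1: "card ?S1 = card S" using card_swap[OF fS Suc.prems(3) False] .
      have "reach N ?S1 (insert y (?S1 - {?p}))"
        by (rule Suc.IH) (use Suc.prems pb c1 py cp in auto)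
      moreover have "insert y (?S1 - {?p}) = insert y (S - {x})" using False by auto
      ultimately show ?thesis using r1 reach_trans by metis
    next
      case True
      let ?S2 = "insert y (S - {?p})"
      have r1: "reach N S ?S2" by (rule Suc.IH) (use Suc.prems True cp in auto)
      have c2: "card ?S2 = card S" using card_swap[OF fS True Suc.prems(5)] .
      have s2b: "?S2 \<subseteq> bitstrings N" using Suc.prems(1,4) by blast
      have s2c: "4 * card ?S2 \<le> 2 ^ N" using c2 Suc.prems(2) by simp
      have s2x: "x \<in> ?S2" using Suc.prems(3) px by auto
      have s2p: "flip k x \<notin> ?S2" using py by blast
      have "reach N ?S2 (insert (flip k x) (?S2 - {x}))"
        by (rule adj[OF N k(1) s2b s2c s2x s2p])
      moreover have "insert (flip k x) (?S2 - {x}) = insert y (S - {x})" using True px Suc.prems(3,5) by auto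
      ultimately show ?thesis using r1 reach_trans by metis
    qed
  qed
qed

lemma trans_m:
  assumes N: "N \<ge> 3" and T: "T \<subseteq> bitstrings N" and c: "4 * card T \<le> 2 ^ N"
  shows "S \<subseteq> bitstrings N \<Longrightarrow> card S = card T \<Longrightarrow> card (S - T) = n \<Longrightarrow> reach N S T"
proof (induction n arbitrary: S)
  case 0
  have fS: "finite S" using finite_subset[OF "0.prems"(1) finite_bits] .
  have fT: "finite T" using finite_subset[OF T finite_bits] .
  have "S - T = {}" using 0 fS by simp
  then have "S \<subseteq> T" by blast
  then have "S = T" using card_subset_eq[OF fT] 0 by simp
  then show ?case by (simp add: reach_refl)
next
  case (Suc n)
  have fS: "finite S" using finite_subset[OF Suc.prems(1) finite_bits] .
  have fT: "finite T" using finite_subset[OF T finite_bits] .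
  have "S - T \<noteq> {}" using Suc.prems(3) by (metis card.empty nat.distinct(1))
  then obtain x where x: "x \<in> S" "x \<notin> T" by blast
  have "T - S \<noteq> {}"
  proof
    assume "T - S = {}"
    then have "T \<subseteq> S" by blast
    then have "T = S" using card_subset_eq[OF fS] Suc.prems(2) by simp
    then show False using x by blast
  qed
  then obtain y where y: "y \<in> T" "y \<notin> S" by blast
  let ?S1 = "insert y (S - {x})"
  have yb: "y \<in> bitstrings N" using y T by blast
  have r1: "reach N S ?S1"
    by (rule exch[OF N Suc.prems(1) _ x(1) yb y(2) refl]) (use c Suc.prems(2) in simp)
  have c1: "card ?S1 = card T" using card_swap[OF fS x(1) y(2)] Suc.prems(2) by simp
  have "?S1 - T = (S - T) - {x}" using y by auto
  then have "card (?S1 - T) = n" using Suc.prems(3) x by simp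
  then have "reach N ?S1 T" using Suc.IH[of ?S1] Suc.prems(1) yb c1 by blast
  then show ?case using r1 reach_trans by metis
qed




lemma apply_gates_append: "apply_gates (us @ vs) S = apply_gates vs (apply_gates us S)"
  by (simp add: apply_gates_def)

lemma apply_gates_rep: "u ` T = T \<Longrightarrow> apply_gates (replicate r u) T = T"
  by (induction r) (simp_all add: apply_gates_def)

theorem lemma4:
  fixes N m :: nat
  assumes "N \<ge> 3" and "1 \<le> m" and "4 * m \<le> 2 ^ N"
  shows "\<forall>S \<in> Sigma_m N m. \<forall>S' \<in> Sigma_m N m. \<exists>lmin. \<forall>l \<ge> lmin.
           \<exists>us. length us = l \<and> set us \<subseteq> gate_set N \<and> apply_gates us S = S'"
proof (intro ballI)
  fix S S' assume S: "S \<in> Sigma_m N m" and S': "S' \<in> Sigma_m N m"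
  have N: "N \<ge> 3" using assms(1) .
  have Sb: "S \<subseteq> bitstrings N" "card S = m" using S by (auto simp: Sigma_m_def)
  have S'b: "S' \<subseteq> bitstrings N" "card S' = m" using S' by (auto simp: Sigma_m_def)
  have "2 * card (Rb N 0) = 2 ^ N" using card_Rb[of 0 N] N by simp
  then have "m \<le> card (Rb N 0)" using assms(3) by linarith
  then obtain T where T: "T \<subseteq> Rb N 0" "card T = m" "finite T" by (rule obtain_subset_with_card_n)
  have Tb: "T \<subseteq> bitstrings N" using T(1) by (auto simp: Rb_def)
  let ?u = "gate N 1 True True"
  have ug: "?u \<in> gate_set N" unfolding gate_set_def using N by (intro CollectI exI[of _ 1] exI[of _ True] conjI) auto
  have e: "(1 + N - 1) mod N = 0" using N by simp
  have "?u z = z" if "z \<in> T" for z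
  proof -
    have "z ! 0 = False" using that T(1) by (auto simp: Rb_def)
    then show ?thesis by (simp add: gate_def e)
  qed
  then have uT: "?u ` T = T" by simp
  have "reach N S T"
    by (rule trans_m[OF N Tb _ Sb(1) _ refl]) (use T(2) Sb(2) assms(3) in simp_all)
  then obtain us1 where us1: "set us1 \<subseteq> gate_set N" "apply_gates us1 S = T"
    unfolding reach_def by blast
  have "reach N T S'"
    by (rule trans_m[OF N S'b(1) _ Tb _ refl]) (use T(2) S'b(2) assms(3) in simp_all)
  then obtain us2 where us2: "set us2 \<subseteq> gate_set N" "apply_gates us2 T = S'"
    unfolding reach_def by blast
  show "\<exists>lmin. \<forall>l \<ge> lmin. \<exists>us. length us = l \<and> set us \<subseteq> gate_set N \<and> apply_gates us S = S'"
  proof (rule exI[of _ "length us1 + length us2"], intro allI impI)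
    fix l assume l: "length us1 + length us2 \<le> l"
    let ?us = "us1 @ replicate (l - (length us1 + length us2)) ?u @ us2"
    have "length ?us = l" using l by simp
    moreover have "set ?us \<subseteq> gate_set N" using us1 us2 ug by auto
    moreover have "apply_gates ?us S = S'"
      using us1(2) us2(2) apply_gates_rep[OF uT] by (simp add: apply_gates_append)
    ultimately show "\<exists>us. length us = l \<and> set us \<subseteq> gate_set N \<and> apply_gates us S = S'" by blast
  qed
qed


end
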